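(* Let $n \ge 1$. If a partial coloring of an $n\times n$ square $A$ uniquely extends to $L(n,2n-2)$, then $A$ has at most $\frac{8n}{5}$ uncolored entries (hence at most $\lfloor 8n/5\rfloor$ uncolored entries).
   Context: For positive integers $n,k$, let $\mathcal{L}_{n,k}$ be the set of $n\times n$ squares all of whose entries are colored with colors from a fixed set of $k$ colors $\{1,\dots,k\}$ such that any two entries in the same row, or in the same column, have different colors. Entries are indexed $(i,j)$, $i$ the row and $j$ the column, $1\le i,j\le n$. A partial coloring of an $n\times n$ square assigns colors from $\{1,\dots,k\}$ to some of its entries; the remaining entries are called uncolored. A partial coloring extends to $L(n,k)$ if the uncolored entries can be colored so that the resulting fully colored square lies in $\mathcal{L}_{n,k}$ (keeping the given colors), and it uniquely extends to $L(n,k)$ if there is exactly one such way. *)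

theory Defs
  imports Complex_Main
begin

text \<open>Entries of an n x n square are indexed by (i,j) with 1 \<le> i,j \<le> n.
A fully colored square is a function on index pairs; to make it a unique
object we require it to be 0 outside the index set.\<close>

definition cells :: "nat \<Rightarrow> (nat \<times> nat) set" where
  "cells n = {1..n} \<times> {1..n}"

definition latin_like :: "nat \<Rightarrow> nat \<Rightarrow> (nat \<times> nat \<Rightarrow> nat) \<Rightarrow> bool" where
  "latin_like n k L \<longleftrightarrow>
     (\<forall>c. c \<notin> cells n \<longrightarrow> L c = 0) \<and>
     (\<forall>c\<in>cells n. L c \<in> {1..k}) \<and>
     (\<forall>i\<in>{1..n}. \<forall>j\<in>{1..n}. \<forall>j'\<in>{1..n}. j \<noteq> j' \<longrightarrow> L (i,j) \<noteq> L (i,j')) \<and>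
     (\<forall>j\<in>{1..n}. \<forall>i\<in>{1..n}. \<forall>i'\<in>{1..n}. i \<noteq> i' \<longrightarrow> L (i,j) \<noteq> L (i',j))"

definition partial_coloring :: "nat \<Rightarrow> nat \<Rightarrow> (nat \<times> nat \<Rightarrow> nat option) \<Rightarrow> bool" where
  "partial_coloring n k A \<longleftrightarrow>
     (\<forall>c. c \<notin> cells n \<longrightarrow> A c = None) \<and>
     (\<forall>c\<in>cells n. \<forall>x. A c = Some x \<longrightarrow> x \<in> {1..k})"

definition uncolored :: "nat \<Rightarrow> (nat \<times> nat \<Rightarrow> nat option) \<Rightarrow> (nat \<times> nat) set" where
  "uncolored n A = {c \<in> cells n. A c = None}"

definition extensions :: "nat \<Rightarrow> nat \<Rightarrow> (nat \<times> nat \<Rightarrow> nat option) \<Rightarrow> (nat \<times> nat \<Rightarrow> nat) set" where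
  "extensions n k A = {L. latin_like n k L \<and> (\<forall>c\<in>cells n. \<forall>x. A c = Some x \<longrightarrow> L c = x)}"

definition uniquely_extends :: "nat \<Rightarrow> nat \<Rightarrow> (nat \<times> nat \<Rightarrow> nat option) \<Rightarrow> bool" where
  "uniquely_extends n k A \<longleftrightarrow> (\<exists>!L. L \<in> extensions n k A)"

end

theory Submission
  imports Defs
begin

lemma mod_latin:
  assumes lat: "latin_like n k L"
    and out: "\<And>c. c \<notin> S \<Longrightarrow> L' c = L c"
    and Ssub: "S \<subseteq> cells n"
    and rng: "\<And>c. c \<in> S \<Longrightarrow> L' c \<in> {1..k}"
    and rowc: "\<And>i j j'. (i,j) \<in> S \<Longrightarrow> j' \<in> {1..n} \<Longrightarrow> j' \<noteq> j \<Longrightarrow> L' (i,j') \<noteq> L' (i,j)"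
    and colc: "\<And>i j i'. (i,j) \<in> S \<Longrightarrow> i' \<in> {1..n} \<Longrightarrow> i' \<noteq> i \<Longrightarrow> L' (i',j) \<noteq> L' (i,j)"
  shows "latin_like n k L'"
  unfolding latin_like_def
proof (intro conjI ballI allI impI)
  fix c assume "c \<notin> cells n"
  then have "c \<notin> S" using Ssub by auto
  then have "L' c = L c" using out by blast
  then show "L' c = 0" using lat \<open>c \<notin> cells n\<close> unfolding latin_like_def by auto
next
  fix c assume "c \<in> cells n"
  then show "L' c \<in> {1..k}" using lat rng out unfolding latin_like_def by (cases "c \<in> S") auto
next
  fix i j j' assume i: "i \<in> {1..n}" and j: "j \<in> {1..n}" and j': "j' \<in> {1..n}" and ne: "j \<noteq> j'"
  show "L' (i, j) \<noteq> L' (i, j')"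
  proof (cases "(i,j) \<in> S")
    case True then show ?thesis using rowc[of i j j'] j' ne by auto
  next
    case False
    show ?thesis
    proof (cases "(i,j') \<in> S")
      case True then show ?thesis using rowc[of i j' j] j ne by auto
    next
      case F2: False
      then show ?thesis using False out lat i j j' ne unfolding latin_like_def by auto
    qed
  qed
next
  fix j i i' assume j: "j \<in> {1..n}" and i: "i \<in> {1..n}" and i': "i' \<in> {1..n}" and ne: "i \<noteq> i'"
  show "L' (i, j) \<noteq> L' (i', j)"
  proof (cases "(i,j) \<in> S")
    case True then show ?thesis using colc[of i j i'] i' ne by auto
  next
    case False
    show ?thesis
    proof (cases "(i',j) \<in> S")
      case True then show ?thesis using colc[of i' j i] i ne by auto
    next
      case F2: False
      then show ?thesis using False out lat i j i' ne unfolding latin_like_def by auto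
    qed
  qed
qed

lemma C4_abs:
  fixes Ri Ri' Cj Cj' :: "'c \<Rightarrow> bool" and a b c e :: 'c
  assumes f: "Ri a" "Ri b" "Ri' e" "Ri' c" "Cj a" "Cj e" "Cj' b" "Cj' c"
    and d: "a \<noteq> b" "e \<noteq> c" "a \<noteq> e" "b \<noteq> c"
    and ix: "\<And>u v w. u \<noteq> v \<Longrightarrow> u \<noteq> w \<Longrightarrow> v \<noteq> w \<Longrightarrow> Ri u \<Longrightarrow> Cj u \<Longrightarrow> Ri v \<Longrightarrow> Cj v \<Longrightarrow> Ri w \<Longrightarrow> Cj w \<Longrightarrow> False"
    and iy: "\<And>u v w. u \<noteq> v \<Longrightarrow> u \<noteq> w \<Longrightarrow> v \<noteq> w \<Longrightarrow> Ri u \<Longrightarrow> Cj' u \<Longrightarrow> Ri v \<Longrightarrow> Cj' v \<Longrightarrow> Ri w \<Longrightarrow> Cj' w \<Longrightarrow> False"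
    and iz: "\<And>u v w. u \<noteq> v \<Longrightarrow> u \<noteq> w \<Longrightarrow> v \<noteq> w \<Longrightarrow> Ri' u \<Longrightarrow> Cj u \<Longrightarrow> Ri' v \<Longrightarrow> Cj v \<Longrightarrow> Ri' w \<Longrightarrow> Cj w \<Longrightarrow> False"
    and iw: "\<And>u v w. u \<noteq> v \<Longrightarrow> u \<noteq> w \<Longrightarrow> v \<noteq> w \<Longrightarrow> Ri' u \<Longrightarrow> Cj' u \<Longrightarrow> Ri' v \<Longrightarrow> Cj' v \<Longrightarrow> Ri' w \<Longrightarrow> Cj' w \<Longrightarrow> False"
    and s1: "Cj b \<or> Cj' a" and s2: "Cj c \<or> Cj' e" and s3: "Ri e \<or> Ri' a" and s4: "Ri c \<or> Ri' b"
    and rA: "(Cj b \<and> b \<noteq> e) \<or> (Ri c \<and> c \<noteq> a) \<or> (Cj' e \<and> e \<noteq> b) \<or> (Ri' a \<and> a \<noteq> c)"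
    and rB: "(Ri e \<and> e \<noteq> b) \<or> (Cj c \<and> c \<noteq> a) \<or> (Ri' b \<and> b \<noteq> e) \<or> (Cj' a \<and> a \<noteq> c)"
  shows False
proof -
  have x1: "\<not> (Cj b \<and> Ri e)" if "b \<noteq> e" using ix[of a b e] f d that by blast
  have x2: "\<not> (Cj b \<and> Ri c \<and> Cj c)" if "a \<noteq> c" using ix[of a b c] f d that by blast
  have x3: "\<not> (Ri e \<and> Ri c \<and> Cj c)" if "a \<noteq> c" using ix[of a e c] f d that by blast
  have y1: "\<not> (Ri c \<and> Cj' a)" if "a \<noteq> c" using iy[of b c a] f d that by blast
  have y2: "\<not> (Ri c \<and> Ri e \<and> Cj' e)" if "b \<noteq> e" using iy[of b c e] f d that by blast
  have y3: "\<not> (Cj' a \<and> Ri e \<and> Cj' e)" if "b \<noteq> e" using iy[of b a e] f d that by blast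
  have z1: "\<not> (Ri' a \<and> Cj c)" if "a \<noteq> c" using iz[of e a c] f d that by blast
  have z2: "\<not> (Ri' a \<and> Ri' b \<and> Cj b)" if "b \<noteq> e" using iz[of e a b] f d that by blast
  have z3: "\<not> (Cj c \<and> Ri' b \<and> Cj b)" if "b \<noteq> e" using iz[of e c b] f d that by blast
  have w1: "\<not> (Cj' e \<and> Ri' b)" if "b \<noteq> e" using iw[of c e b] f d that by blast
  have w2: "\<not> (Cj' e \<and> Ri' a \<and> Cj' a)" if "a \<noteq> c" using iw[of c e a] f d that by blast
  have w3: "\<not> (Ri' b \<and> Ri' a \<and> Cj' a)" if "a \<noteq> c" using iw[of c b a] f d that by blast
  show False
  proof (cases "b = e")
    case True
    then have "a \<noteq> c \<or> a = c" by simp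
    show ?thesis
    proof (cases "a = c")
      case True
      then show ?thesis using rA \<open>b = e\<close> by blast
    next
      case False
      have "\<not> (Ri c \<and> Cj c)" using ix[of a b c] f d False \<open>b = e\<close> by blast
      moreover have "\<not> (Ri' a \<and> Cj' a)" using iw[of c e a] f d False \<open>b = e\<close> by blast
      ultimately show ?thesis using rA rB \<open>b = e\<close> False y1 z1 by blast
    qed
  next
    case False
    show ?thesis
    proof (cases "a = c")
      case True
      have "\<not> (Cj b \<and> Ri' b)" using iz[of e b c] f d True False by blast
      moreover have "\<not> (Cj' e \<and> Ri e)" using iy[of b e a] f d True False by blast
      ultimately show ?thesis using rA rB True False x1 w1 by blast
    next
      case ac: False
      show ?thesis using s1 s2 s3 s4 rA rB x1[OF False] x2[OF ac] x3[OF ac] y1[OF ac] y2[OF False] y3[OF False]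
        z1[OF ac] z2[OF False] z3[OF False] w1[OF False] w2[OF ac] w3[OF ac] by blast
    qed
  qed
qed

lemma P5_abs:
  fixes R1 R2 R3 C0 C1 C2 K :: "'c \<Rightarrow> bool" and a1 a2 a3 a4 a5 g h p q :: 'c
  assumes rows: "R1 a1" "R1 a2" "R1 h" "R2 g" "R2 a3" "R2 a4" "R3 q" "R3 p" "R3 a5"
    and cols: "C0 a1" "C0 g" "C0 q" "C1 a2" "C1 a3" "C1 p" "C2 h" "C2 a4" "C2 a5"
    and dr: "a1 \<noteq> a2" "a1 \<noteq> h" "a2 \<noteq> h" "g \<noteq> a3" "g \<noteq> a4" "a3 \<noteq> a4" "q \<noteq> p" "q \<noteq> a5" "p \<noteq> a5"
    and dc: "a1 \<noteq> g" "a1 \<noteq> q" "g \<noteq> q" "a2 \<noteq> a3" "a2 \<noteq> p" "a3 \<noteq> p" "h \<noteq> a4" "h \<noteq> a5" "a4 \<noteq> a5"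
    and K: "K a1" "K a2" "K a3" "K a4" "K a5" "K g" "K h" "K p" "K q"
    and cc2: "\<And>v. K v \<Longrightarrow> R1 v \<or> C1 v"
    and cc3: "\<And>v. K v \<Longrightarrow> R2 v \<or> C1 v"
    and cc4: "\<And>v. K v \<Longrightarrow> R2 v \<or> C2 v"
    and i1: "\<And>u v w. u \<noteq> v \<Longrightarrow> u \<noteq> w \<Longrightarrow> v \<noteq> w \<Longrightarrow> R1 u \<Longrightarrow> C0 u \<Longrightarrow> R1 v \<Longrightarrow> C0 v \<Longrightarrow> R1 w \<Longrightarrow> C0 w \<Longrightarrow> False"
    and i2: "\<And>u v w. u \<noteq> v \<Longrightarrow> u \<noteq> w \<Longrightarrow> v \<noteq> w \<Longrightarrow> R1 u \<Longrightarrow> C1 u \<Longrightarrow> R1 v \<Longrightarrow> C1 v \<Longrightarrow> R1 w \<Longrightarrow> C1 w \<Longrightarrow> False"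
    and i3: "\<And>u v w. u \<noteq> v \<Longrightarrow> u \<noteq> w \<Longrightarrow> v \<noteq> w \<Longrightarrow> R2 u \<Longrightarrow> C1 u \<Longrightarrow> R2 v \<Longrightarrow> C1 v \<Longrightarrow> R2 w \<Longrightarrow> C1 w \<Longrightarrow> False"
    and i4: "\<And>u v w. u \<noteq> v \<Longrightarrow> u \<noteq> w \<Longrightarrow> v \<noteq> w \<Longrightarrow> R2 u \<Longrightarrow> C2 u \<Longrightarrow> R2 v \<Longrightarrow> C2 v \<Longrightarrow> R2 w \<Longrightarrow> C2 w \<Longrightarrow> False"
    and i5: "\<And>u v w. u \<noteq> v \<Longrightarrow> u \<noteq> w \<Longrightarrow> v \<noteq> w \<Longrightarrow> R3 u \<Longrightarrow> C2 u \<Longrightarrow> R3 v \<Longrightarrow> C2 v \<Longrightarrow> R3 w \<Longrightarrow> C2 w \<Longrightarrow> False"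
    and e1: "C0 a2 \<or> C1 a1" and e2: "R1 a3 \<or> R2 a2" and e3: "C1 a4 \<or> C2 a3" and e4: "R2 a5 \<or> R3 a4"
  shows False
proof -
  have g: "R1 g \<or> C1 g" using cc2 K by blast
  have h: "R2 h \<or> C1 h" using cc3 K by blast
  have p: "R2 p \<or> C2 p" using cc4 K by blast
  have q2: "R1 q \<or> C1 q" using cc2 K by blast
  have q4: "R2 q \<or> C2 q" using cc4 K by blast
  have a2c: "R2 a2 \<or> C2 a2" using cc4 K by blast
  have n13: False if F1: "C0 a2" and F3: "C1 a4"
  proof -
    have "\<not> C1 g" using i3[of g a3 a4] rows cols dr F3 by blast
    then have "R1 g" using g by blast
    show False
    proof (cases "a2 = g")
      case True
      then show ?thesis using i3[of a2 a3 a4] rows cols dr dc F3 by metis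
    next
      case False
      then show ?thesis using i1[of a1 a2 g] \<open>R1 g\<close> rows cols dr dc F1 by blast
    qed
  qed
  have nB13: False if B1: "C1 a1" and B3: "C2 a3"
  proof -
    have "\<not> C1 h" using i2[of a1 a2 h] rows cols dr B1 by blast
    then have "R2 h" using h by blast
    show False
    proof (cases "h = a3")
      case True
      then show ?thesis using i2[of a1 a2 a3] rows cols dr dc B1 by metis
    next
      case False
      then show ?thesis using i4[of h a3 a4] \<open>R2 h\<close> rows cols dr dc B3 by blast
    qed
  qed
  have n24: False if F2: "R1 a3" and F4: "R2 a5"
  proof -
    have "\<not> R2 h" using i4[of h a4 a5] rows cols dc F4 by blast
    then have "C1 h" using h by blast
    show False
    proof (cases "h = a3")
      case True
      then show ?thesis using i4[of a3 a4 a5] rows cols dr dc F4 by metis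
    next
      case False
      then show ?thesis using i2[of h a2 a3] \<open>C1 h\<close> rows cols dr dc F2 by blast
    qed
  qed
  have nB24: False if B2: "R2 a2" and B4: "R3 a4"
  proof -
    have "\<not> R2 p" using i3[of p a3 a2] rows cols dc B2 by blast
    then have "C2 p" using p by blast
    show False
    proof (cases "p = a4")
      case True
      then show ?thesis using i3[of a2 a3 a4] rows cols dr dc B2 by metis
    next
      case False
      then show ?thesis using i5[of p a4 a5] \<open>C2 p\<close> rows cols dr dc B4 by blast
    qed
  qed
  have caseA: False if F1: "C0 a2" and F2: "R1 a3" and B3: "C2 a3" and B4: "R3 a4"
  proof -
    have "C1 g"
    proof (cases "R1 g")
      case True
      then have "g = a2" using i1[of a1 a2 g] rows cols dr dc F1 by blast
      then show ?thesis using cols by simp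
    qed (use g in blast)
    have "q = a2"
    proof (cases "R1 q")
      case True
      then show ?thesis using i1[of a1 a2 q] rows cols dr dc F1 by blast
    next
      case False
      then have "C1 q" using q2 by blast
      show ?thesis
      proof (cases "R2 q")
        case True
        then have "q = a3" using i3[of a3 g q] \<open>C1 q\<close> \<open>C1 g\<close> rows cols dr dc by blast
        then show ?thesis using i5[of a3 a4 a5] rows cols dr dc B3 B4 by metis
      next
        case False
        then have "C2 q" using q4 by blast
        then have "q = a4" using i5[of a5 a4 q] rows cols dr dc B4 by blast
        then show ?thesis using False rows by simp
      qed
    qed
    show False
    proof (cases "R2 a2")
      case True
      then show False using i3[of a3 g a2] \<open>q = a2\<close> \<open>C1 g\<close> rows cols dr dc by metis
    next
      case False
      then have "C2 a2" using a2c by blast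
      show False
      proof (cases "a2 = a4")
        case True
        then show False using False rows by simp
      next
        case False
        then show False using i5[of a5 a4 a2] \<open>C2 a2\<close> \<open>q = a2\<close> rows cols dr dc B4 by metis
      qed
    qed
  qed
  have caseB: False if F1: "C0 a2" and B3: "C2 a3" and B2: "R2 a2" and F4: "R2 a5"
  proof -
    have "a3 = a5" using i4[of a4 a3 a5] rows cols dr dc B3 F4 by blast
    have "g = a2"
    proof (cases "R1 g")
      case True
      then show ?thesis using i1[of a1 a2 g] rows cols dr dc F1 by blast
    next
      case False
      then have "C1 g" using g by blast
      then show ?thesis using i3[of a3 a2 g] rows cols dr dc B2 by blast
    qed
    have "\<not> R1 q" using i1[of a1 a2 q] rows cols dr dc F1 \<open>g = a2\<close> by blast
    then have "C1 q" using q2 by blast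
    have "\<not> R2 q" using i3[of a3 a2 q] \<open>C1 q\<close> \<open>a3 = a5\<close> \<open>g = a2\<close> rows cols dr dc B2 by metis
    then have "C2 q" using q4 by blast
    have "\<not> R2 p" using i3[of a3 a2 p] rows cols dr dc B2 by blast
    then have "C2 p" using p by blast
    show False using i5[of a5 p q] \<open>C2 p\<close> \<open>C2 q\<close> rows cols dr dc by blast
  qed
  have caseC: False if B1: "C1 a1" and F3: "C1 a4" and F2: "R1 a3" and B4: "R3 a4"
  proof -
    have "a1 = a3" using i2[of a2 a1 a3] rows cols dr dc B1 F2 by blast
    have "\<not> C1 g" using i3[of a3 a4 g] rows cols dr dc F3 by blast
    then have "R1 g" using g by blast
    have "p = a4"
    proof (cases "R2 p")
      case True
      then show ?thesis using i3[of a3 a4 p] rows cols dr dc F3 by blast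
    next
      case False
      then have "C2 p" using p by blast
      then show ?thesis using i5[of a5 a4 p] rows cols dr dc B4 by blast
    qed
    have "\<not> C2 q" using i5[of a5 a4 q] \<open>p = a4\<close> rows cols dr dc B4 by blast
    then have "R2 q" using q4 by blast
    have "\<not> C1 q" using i3[of a3 a4 q] \<open>R2 q\<close> \<open>p = a4\<close> \<open>a1 = a3\<close> rows cols dr dc F3 by metis
    then have "R1 q" using q2 by blast
    show False using i1[of a1 g q] \<open>R1 q\<close> \<open>R1 g\<close> rows cols dr dc by blast
  qed
  have caseD: False if B1: "C1 a1" and F4: "R2 a5"
  proof -
    have "\<not> C1 h" using i2[of a2 a1 h] rows cols dr dc B1 by blast
    then have "R2 h" using h by blast
    show False using i4[of a4 a5 h] \<open>R2 h\<close> rows cols dr dc F4 by blast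
  qed
  show False
    using e1 e2 e3 e4 n13 nB13 n24 nB24 caseA caseB caseC caseD by blast
qed

locale uq =
  fixes n k :: nat and L :: "nat \<times> nat \<Rightarrow> nat" and U :: "(nat \<times> nat) set"
  assumes lat: "latin_like n k L"
    and Usub: "U \<subseteq> cells n"
    and rigid: "\<And>L'. latin_like n k L' \<Longrightarrow> (\<forall>c\<in>cells n - U. L' c = L c) \<Longrightarrow> L' = L"
    and kdef: "k + 2 = 2 * n"
begin

definition inrow :: "nat \<Rightarrow> nat \<Rightarrow> bool" where "inrow i v \<longleftrightarrow> (\<exists>j\<in>{1..n}. L (i,j) = v)"
definition incol :: "nat \<Rightarrow> nat \<Rightarrow> bool" where "incol j v \<longleftrightarrow> (\<exists>i\<in>{1..n}. L (i,j) = v)"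

lemma Ucell: "(i,j) \<in> U \<Longrightarrow> i \<in> {1..n} \<and> j \<in> {1..n}"
  using Usub unfolding cells_def by auto

lemma rng: "i \<in> {1..n} \<Longrightarrow> j \<in> {1..n} \<Longrightarrow> L (i,j) \<in> {1..k}"
  using lat unfolding latin_like_def cells_def by auto

lemma row_inj: "i \<in> {1..n} \<Longrightarrow> j \<in> {1..n} \<Longrightarrow> j' \<in> {1..n} \<Longrightarrow> L (i,j) = L (i,j') \<Longrightarrow> j = j'"
  using lat unfolding latin_like_def by blast

lemma col_inj: "j \<in> {1..n} \<Longrightarrow> i \<in> {1..n} \<Longrightarrow> i' \<in> {1..n} \<Longrightarrow> L (i,j) = L (i',j) \<Longrightarrow> i = i'"
  using lat unfolding latin_like_def by blast

lemma row_ne: "i \<in> {1..n} \<Longrightarrow> j \<in> {1..n} \<Longrightarrow> j' \<in> {1..n} \<Longrightarrow> j \<noteq> j' \<Longrightarrow> L (i,j) \<noteq> L (i,j')"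
  using row_inj by blast
lemma col_ne: "j \<in> {1..n} \<Longrightarrow> i \<in> {1..n} \<Longrightarrow> i' \<in> {1..n} \<Longrightarrow> i \<noteq> i' \<Longrightarrow> L (i,j) \<noteq> L (i',j)"
  using col_inj by blast

lemma inrowI: "j \<in> {1..n} \<Longrightarrow> inrow i (L (i,j))" unfolding inrow_def by blast
lemma incolI: "i \<in> {1..n} \<Longrightarrow> incol j (L (i,j))" unfolding incol_def by blast

lemma no_trade:
  assumes "S \<subseteq> U"
    and out: "\<And>c. c \<notin> S \<Longrightarrow> L' c = L c"
    and rngS: "\<And>c. c \<in> S \<Longrightarrow> L' c \<in> {1..k}"
    and rowc: "\<And>i j j'. (i,j) \<in> S \<Longrightarrow> j' \<in> {1..n} \<Longrightarrow> j' \<noteq> j \<Longrightarrow> L' (i,j') \<noteq> L' (i,j)"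
    and colc: "\<And>i j i'. (i,j) \<in> S \<Longrightarrow> i' \<in> {1..n} \<Longrightarrow> i' \<noteq> i \<Longrightarrow> L' (i',j) \<noteq> L' (i,j)"
  shows "L' = L"
proof (rule rigid)
  show "latin_like n k L'"
    by (rule mod_latin[OF lat out _ rngS rowc colc]) (use assms(1) Usub in auto)
  show "\<forall>c\<in>cells n - U. L' c = L c" using out assms(1) by auto
qed

lemma CC:
  assumes x: "(i,j) \<in> U" and v: "v \<in> {1..k}"
  shows "inrow i v \<or> incol j v"
proof (rule ccontr)
  assume A: "\<not> (inrow i v \<or> incol j v)"
  have ij: "i \<in> {1..n}" "j \<in> {1..n}" using Ucell[OF x] by auto
  let ?L' = "L((i,j) := v)"
  have "?L' = L"
  proof (rule no_trade[of "{(i,j)}"])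
    show "{(i,j)} \<subseteq> U" using x by auto
  next
    fix i0 j0 j0' assume "(i0,j0) \<in> {(i,j)}" "j0' \<in> {1..n}" "j0' \<noteq> j0"
    then show "?L' (i0,j0') \<noteq> ?L' (i0,j0)" using A unfolding inrow_def by auto
  next
    fix i0 j0 i0' assume "(i0,j0) \<in> {(i,j)}" "i0' \<in> {1..n}" "i0' \<noteq> i0"
    then show "?L' (i0',j0) \<noteq> ?L' (i0,j0)" using A unfolding incol_def by auto
  qed (use v in auto)
  then have "L (i,j) = v" by (metis fun_upd_same)
  then show False using A inrowI[OF ij(2), of i] by simp
qed

lemma I2card:
  assumes x: "(i,j) \<in> U"
  shows "card ({v. inrow i v} \<inter> {v. incol j v}) \<le> 2"
proof -
  have ij: "i \<in> {1..n}" "j \<in> {1..n}" using Ucell[OF x] by auto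
  have R: "{v. inrow i v} = (\<lambda>j. L (i,j)) ` {1..n}" unfolding inrow_def by auto
  have C: "{v. incol j v} = (\<lambda>i. L (i,j)) ` {1..n}" unfolding incol_def by auto
  have cR: "card {v. inrow i v} = n"
    unfolding R by (subst card_image) (auto intro!: inj_onI intro: row_inj[OF ij(1)])
  have cC: "card {v. incol j v} = n"
    unfolding C by (subst card_image) (auto intro!: inj_onI intro: col_inj[OF ij(2)])
  have fR: "finite {v. inrow i v}" unfolding R by auto
  have fC: "finite {v. incol j v}" unfolding C by auto
  have sub: "{1..k} \<subseteq> {v. inrow i v} \<union> {v. incol j v}" 
  proof
    fix v assume "v \<in> {1..k}"
    then show "v \<in> {v. inrow i v} \<union> {v. incol j v}" using CC[OF x, of v] by simp
  qed
  have "k \<le> card ({v. inrow i v} \<union> {v. incol j v})"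
    using card_mono[OF _ sub] fR fC by simp
  moreover have "card ({v. inrow i v} \<union> {v. incol j v}) + card ({v. inrow i v} \<inter> {v. incol j v}) = n + n"
    using card_Un_Int[OF fR fC] cR cC by simp
  ultimately show ?thesis using kdef by linarith
qed

lemma fin_row: "finite {v. inrow i v}"
proof -
  have "{v. inrow i v} = (\<lambda>j. L (i,j)) ` {1..n}" unfolding inrow_def by auto
  then show ?thesis by simp
qed

lemma I2:
  assumes x: "(i,j) \<in> U" and d: "u \<noteq> v" "u \<noteq> w" "v \<noteq> w"
    and "inrow i u" "incol j u" "inrow i v" "incol j v" "inrow i w" "incol j w"
  shows False
proof -
  have sub: "{u,v,w} \<subseteq> {v. inrow i v} \<inter> {v. incol j v}" using assms by auto
  have fin: "finite ({v. inrow i v} \<inter> {v. incol j v})" using fin_row by simp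
  have "card {u,v,w} \<le> card ({v. inrow i v} \<inter> {v. incol j v})" by (rule card_mono[OF fin sub])
  also have "\<dots> \<le> 2" by (rule I2card[OF x])
  finally have "card {u,v,w} \<le> 2" .
  then show False using d by simp
qed

lemma SWrow:
  assumes x: "(i,j) \<in> U" and y: "(i,j') \<in> U" and ne: "j \<noteq> j'"
  shows "incol j (L (i,j')) \<or> incol j' (L (i,j))"
proof (rule ccontr)
  assume A: "\<not> (incol j (L (i,j')) \<or> incol j' (L (i,j)))"
  have ij: "i \<in> {1..n}" "j \<in> {1..n}" "j' \<in> {1..n}" using Ucell[OF x] Ucell[OF y] by auto
  let ?L' = "L((i,j) := L (i,j'), (i,j') := L (i,j))"
  have "?L' = L"
  proof (rule no_trade[of "{(i,j),(i,j')}"])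
    show "{(i,j),(i,j')} \<subseteq> U" using x y by auto
  next
    fix c assume "c \<in> {(i,j),(i,j')}" then show "?L' c \<in> {1..k}" using rng ij by auto
  next
    fix i0 j0 j0' assume m: "(i0,j0) \<in> {(i,j),(i,j')}" and j0': "j0' \<in> {1..n}" "j0' \<noteq> j0"
    have h1: "L (i,j0') \<noteq> L (i,j)" if "j0' \<noteq> j" using row_ne[OF ij(1) j0'(1) ij(2) that] .
    have h2: "L (i,j0') \<noteq> L (i,j')" if "j0' \<noteq> j'" using row_ne[OF ij(1) j0'(1) ij(3) that] .
    have h3: "L (i,j) \<noteq> L (i,j')" using row_ne[OF ij(1) ij(2) ij(3) ne] .
    from m consider "i0 = i" "j0 = j" | "i0 = i" "j0 = j'" by auto
    then show "?L' (i0,j0') \<noteq> ?L' (i0,j0)"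
      by cases (use h1 h2 h3 j0' ne in auto)
  next
    fix i0 j0 i0' assume "(i0,j0) \<in> {(i,j),(i,j')}" "i0' \<in> {1..n}" "i0' \<noteq> i0"
    then have "i0 = i" "j0 = j \<or> j0 = j'" by auto
    then show "?L' (i0',j0) \<noteq> ?L' (i0,j0)" using A ne \<open>i0' \<in> {1..n}\<close> \<open>i0' \<noteq> i0\<close> unfolding incol_def by auto
  qed auto
  then have "?L' (i,j) = L (i,j)" by simp
  then have "L (i,j) = L (i,j')" using ne by simp
  then show False using row_inj[OF ij] ne by simp
qed

lemma SWcol:
  assumes x: "(i,j) \<in> U" and y: "(i',j) \<in> U" and ne: "i \<noteq> i'"
  shows "inrow i (L (i',j)) \<or> inrow i' (L (i,j))"
proof (rule ccontr)
  assume A: "\<not> (inrow i (L (i',j)) \<or> inrow i' (L (i,j)))"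
  have ij: "j \<in> {1..n}" "i \<in> {1..n}" "i' \<in> {1..n}" using Ucell[OF x] Ucell[OF y] by auto
  let ?L' = "L((i,j) := L (i',j), (i',j) := L (i,j))"
  have "?L' = L"
  proof (rule no_trade[of "{(i,j),(i',j)}"])
    show "{(i,j),(i',j)} \<subseteq> U" using x y by auto
  next
    fix c assume "c \<in> {(i,j),(i',j)}" then show "?L' c \<in> {1..k}" using rng ij by auto
  next
    fix i0 j0 j0' assume "(i0,j0) \<in> {(i,j),(i',j)}" "j0' \<in> {1..n}" "j0' \<noteq> j0"
    then have "j0 = j" "i0 = i \<or> i0 = i'" by auto
    then show "?L' (i0,j0') \<noteq> ?L' (i0,j0)" using A ne \<open>j0' \<in> {1..n}\<close> \<open>j0' \<noteq> j0\<close> unfolding inrow_def by auto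
  next
    fix i0 j0 i0' assume m: "(i0,j0) \<in> {(i,j),(i',j)}" and i0': "i0' \<in> {1..n}" "i0' \<noteq> i0"
    have h1: "L (i0',j) \<noteq> L (i,j)" if "i0' \<noteq> i" using col_ne[OF ij(1) i0'(1) ij(2) that] .
    have h2: "L (i0',j) \<noteq> L (i',j)" if "i0' \<noteq> i'" using col_ne[OF ij(1) i0'(1) ij(3) that] .
    have h3: "L (i,j) \<noteq> L (i',j)" using col_ne[OF ij(1) ij(2) ij(3) ne] .
    from m consider "i0 = i" "j0 = j" | "i0 = i'" "j0 = j" by auto
    then show "?L' (i0',j0) \<noteq> ?L' (i0,j0)"
      by cases (use h1 h2 h3 i0' ne in auto)
  qed auto
  then have "?L' (i,j) = L (i,j)" by simp
  then have "L (i,j) = L (i',j)" using ne by simp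
  then show False using col_inj[OF ij] ne by simp
qed


lemma rot3row:
  assumes x1: "(i,j1) \<in> U" and x2: "(i,j2) \<in> U" and x3: "(i,j3) \<in> U"
    and d: "j1 \<noteq> j2" "j1 \<noteq> j3" "j2 \<noteq> j3"
    and c1: "\<not> incol j1 (L (i,j3))" and c2: "\<not> incol j2 (L (i,j1))" and c3: "\<not> incol j3 (L (i,j2))"
  shows False
proof -
  have ij: "i \<in> {1..n}" "j1 \<in> {1..n}" "j2 \<in> {1..n}" "j3 \<in> {1..n}" using Ucell[OF x1] Ucell[OF x2] Ucell[OF x3] by auto
  let ?L' = "L((i,j1) := L (i,j3), (i,j2) := L (i,j1), (i,j3) := L (i,j2))"
  have "?L' = L"
  proof (rule no_trade[of "{(i,j1),(i,j2),(i,j3)}"])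
    show "{(i,j1),(i,j2),(i,j3)} \<subseteq> U" using x1 x2 x3 by auto
  next
    fix c assume "c \<in> {(i,j1),(i,j2),(i,j3)}" then show "?L' c \<in> {1..k}" using rng ij by auto
  next
    fix i0 j0 j0' assume m: "(i0,j0) \<in> {(i,j1),(i,j2),(i,j3)}" and j0': "j0' \<in> {1..n}" "j0' \<noteq> j0"
    have h1: "L (i,j0') \<noteq> L (i,j1)" if "j0' \<noteq> j1" using row_ne[OF ij(1) j0'(1) ij(2) that] .
    have h2: "L (i,j0') \<noteq> L (i,j2)" if "j0' \<noteq> j2" using row_ne[OF ij(1) j0'(1) ij(3) that] .
    have h3: "L (i,j0') \<noteq> L (i,j3)" if "j0' \<noteq> j3" using row_ne[OF ij(1) j0'(1) ij(4) that] .
    have h4: "L (i,j1) \<noteq> L (i,j2)" "L (i,j1) \<noteq> L (i,j3)" "L (i,j2) \<noteq> L (i,j3)"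
      using row_ne[OF ij(1) ij(2) ij(3) d(1)] row_ne[OF ij(1) ij(2) ij(4) d(2)] row_ne[OF ij(1) ij(3) ij(4) d(3)] by auto
    from m consider "i0 = i" "j0 = j1" | "i0 = i" "j0 = j2" | "i0 = i" "j0 = j3" by auto
    then show "?L' (i0,j0') \<noteq> ?L' (i0,j0)"
      by cases (use h1 h2 h3 h4 j0' d in auto)
  next
    fix i0 j0 i0' assume m: "(i0,j0) \<in> {(i,j1),(i,j2),(i,j3)}" and i0': "i0' \<in> {1..n}" "i0' \<noteq> i0"
    have "i0 = i" using m by auto
    have e1: "L (i0',j1) \<noteq> L (i,j3)" using c1 i0' unfolding incol_def by auto
    have e2: "L (i0',j2) \<noteq> L (i,j1)" using c2 i0' unfolding incol_def by auto
    have e3: "L (i0',j3) \<noteq> L (i,j2)" using c3 i0' unfolding incol_def by auto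
    from m consider "j0 = j1" | "j0 = j2" | "j0 = j3" by auto
    then show "?L' (i0',j0) \<noteq> ?L' (i0,j0)"
      by cases (use e1 e2 e3 i0' \<open>i0 = i\<close> d in auto)
  qed auto
  then have "?L' (i,j1) = L (i,j1)" by simp
  then have "L (i,j3) = L (i,j1)" using d by simp
  then show False using row_ne[OF ij(1) ij(2) ij(4) d(2)] by simp
qed

lemma rot3col:
  assumes x1: "(i1,j) \<in> U" and x2: "(i2,j) \<in> U" and x3: "(i3,j) \<in> U"
    and d: "i1 \<noteq> i2" "i1 \<noteq> i3" "i2 \<noteq> i3"
    and c1: "\<not> inrow i1 (L (i3,j))" and c2: "\<not> inrow i2 (L (i1,j))" and c3: "\<not> inrow i3 (L (i2,j))"
  shows False
proof -
  have ij: "j \<in> {1..n}" "i1 \<in> {1..n}" "i2 \<in> {1..n}" "i3 \<in> {1..n}" using Ucell[OF x1] Ucell[OF x2] Ucell[OF x3] by auto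
  let ?L' = "L((i1,j) := L (i3,j), (i2,j) := L (i1,j), (i3,j) := L (i2,j))"
  have "?L' = L"
  proof (rule no_trade[of "{(i1,j),(i2,j),(i3,j)}"])
    show "{(i1,j),(i2,j),(i3,j)} \<subseteq> U" using x1 x2 x3 by auto
  next
    fix c assume "c \<in> {(i1,j),(i2,j),(i3,j)}" then show "?L' c \<in> {1..k}" using rng ij by auto
  next
    fix i0 j0 j0' assume m: "(i0,j0) \<in> {(i1,j),(i2,j),(i3,j)}" and j0': "j0' \<in> {1..n}" "j0' \<noteq> j0"
    have "j0 = j" using m by auto
    have e1: "L (i1,j0') \<noteq> L (i3,j)" using c1 j0' \<open>j0 = j\<close> unfolding inrow_def by auto
    have e2: "L (i2,j0') \<noteq> L (i1,j)" using c2 j0' \<open>j0 = j\<close> unfolding inrow_def by auto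
    have e3: "L (i3,j0') \<noteq> L (i2,j)" using c3 j0' \<open>j0 = j\<close> unfolding inrow_def by auto
    from m consider "i0 = i1" | "i0 = i2" | "i0 = i3" by auto
    then show "?L' (i0,j0') \<noteq> ?L' (i0,j0)"
      by cases (use e1 e2 e3 j0' \<open>j0 = j\<close> d in auto)
  next
    fix i0 j0 i0' assume m: "(i0,j0) \<in> {(i1,j),(i2,j),(i3,j)}" and i0': "i0' \<in> {1..n}" "i0' \<noteq> i0"
    have h1: "L (i0',j) \<noteq> L (i1,j)" if "i0' \<noteq> i1" using col_ne[OF ij(1) i0'(1) ij(2) that] .
    have h2: "L (i0',j) \<noteq> L (i2,j)" if "i0' \<noteq> i2" using col_ne[OF ij(1) i0'(1) ij(3) that] .
    have h3: "L (i0',j) \<noteq> L (i3,j)" if "i0' \<noteq> i3" using col_ne[OF ij(1) i0'(1) ij(4) that] .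
    have h4: "L (i1,j) \<noteq> L (i2,j)" "L (i1,j) \<noteq> L (i3,j)" "L (i2,j) \<noteq> L (i3,j)"
      using col_ne[OF ij(1) ij(2) ij(3) d(1)] col_ne[OF ij(1) ij(2) ij(4) d(2)] col_ne[OF ij(1) ij(3) ij(4) d(3)] by auto
    from m consider "i0 = i1" "j0 = j" | "i0 = i2" "j0 = j" | "i0 = i3" "j0 = j" by auto
    then show "?L' (i0',j0) \<noteq> ?L' (i0,j0)"
      by cases (use h1 h2 h3 h4 i0' d in auto)
  qed auto
  then have "?L' (i1,j) = L (i1,j)" by simp
  then have "L (i3,j) = L (i1,j)" using d by simp
  then show False using col_ne[OF ij(1) ij(2) ij(4) d(2)] by simp
qed

lemma L3row:
  assumes x1: "(i,j1) \<in> U" and x2: "(i,j2) \<in> U" and x3: "(i,j3) \<in> U"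
    and d: "j1 \<noteq> j2" "j1 \<noteq> j3" "j2 \<noteq> j3"
  shows False
proof -
  have ij: "i \<in> {1..n}" "j1 \<in> {1..n}" "j2 \<in> {1..n}" "j3 \<in> {1..n}" using Ucell[OF x1] Ucell[OF x2] Ucell[OF x3] by auto
  have h4: "L (i,j1) \<noteq> L (i,j2)" "L (i,j1) \<noteq> L (i,j3)" "L (i,j2) \<noteq> L (i,j3)"
    using row_ne[OF ij(1) ij(2) ij(3) d(1)] row_ne[OF ij(1) ij(2) ij(4) d(2)] row_ne[OF ij(1) ij(3) ij(4) d(3)] by auto
  have r: "inrow i (L (i,j1))" "inrow i (L (i,j2))" "inrow i (L (i,j3))" using inrowI ij by auto
  have c: "incol j1 (L (i,j1))" "incol j2 (L (i,j2))" "incol j3 (L (i,j3))" using incolI ij by auto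
  have s12: "incol j1 (L (i,j2)) \<or> incol j2 (L (i,j1))" using SWrow[OF x1 x2 d(1)] .
  have s13: "incol j1 (L (i,j3)) \<or> incol j3 (L (i,j1))" using SWrow[OF x1 x3 d(2)] .
  have s23: "incol j2 (L (i,j3)) \<or> incol j3 (L (i,j2))" using SWrow[OF x2 x3 d(3)] .
  have o1: "\<not> (incol j1 (L (i,j2)) \<and> incol j1 (L (i,j3)))"
    using I2[OF x1 h4(1) h4(2) h4(3)] r c by blast
  have o2: "\<not> (incol j2 (L (i,j1)) \<and> incol j2 (L (i,j3)))"
    using I2[OF x2 h4(1) h4(2) h4(3)] r c by blast
  have o3: "\<not> (incol j3 (L (i,j1)) \<and> incol j3 (L (i,j2)))"
    using I2[OF x3 h4(1) h4(2) h4(3)] r c by blast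
  show False
    using s12 s13 s23 o1 o2 o3 rot3row[OF x1 x2 x3 d] rot3row[OF x1 x3 x2 d(2) d(1) d(3)[symmetric]] by blast
qed

lemma L3col:
  assumes x1: "(i1,j) \<in> U" and x2: "(i2,j) \<in> U" and x3: "(i3,j) \<in> U"
    and d: "i1 \<noteq> i2" "i1 \<noteq> i3" "i2 \<noteq> i3"
  shows False
proof -
  have ij: "j \<in> {1..n}" "i1 \<in> {1..n}" "i2 \<in> {1..n}" "i3 \<in> {1..n}" using Ucell[OF x1] Ucell[OF x2] Ucell[OF x3] by auto
  have h4: "L (i1,j) \<noteq> L (i2,j)" "L (i1,j) \<noteq> L (i3,j)" "L (i2,j) \<noteq> L (i3,j)"
    using col_ne[OF ij(1) ij(2) ij(3) d(1)] col_ne[OF ij(1) ij(2) ij(4) d(2)] col_ne[OF ij(1) ij(3) ij(4) d(3)] by auto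
  have c: "incol j (L (i1,j))" "incol j (L (i2,j))" "incol j (L (i3,j))" using incolI ij by auto
  have r: "inrow i1 (L (i1,j))" "inrow i2 (L (i2,j))" "inrow i3 (L (i3,j))" using inrowI ij by auto
  have s12: "inrow i1 (L (i2,j)) \<or> inrow i2 (L (i1,j))" using SWcol[OF x1 x2 d(1)] .
  have s13: "inrow i1 (L (i3,j)) \<or> inrow i3 (L (i1,j))" using SWcol[OF x1 x3 d(2)] .
  have s23: "inrow i2 (L (i3,j)) \<or> inrow i3 (L (i2,j))" using SWcol[OF x2 x3 d(3)] .
  have o1: "\<not> (inrow i1 (L (i2,j)) \<and> inrow i1 (L (i3,j)))"
    using I2[OF x1 h4(1) h4(2) h4(3)] r c by blast
  have o2: "\<not> (inrow i2 (L (i1,j)) \<and> inrow i2 (L (i3,j)))"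
    using I2[OF x2 h4(1) h4(2) h4(3)] r c by blast
  have o3: "\<not> (inrow i3 (L (i1,j)) \<and> inrow i3 (L (i2,j)))"
    using I2[OF x3 h4(1) h4(2) h4(3)] r c by blast
  show False
    using s12 s13 s23 o1 o2 o3 rot3col[OF x1 x2 x3 d] rot3col[OF x1 x3 x2 d(2) d(1) d(3)[symmetric]] by blast
qed


lemma rot4:
  assumes x: "(i,j) \<in> U" and y: "(i,j') \<in> U" and z: "(i',j) \<in> U" and w: "(i',j') \<in> U"
    and d: "i \<noteq> i'" "j \<noteq> j'"
    and o1: "\<And>r. r \<in> {1..n} \<Longrightarrow> r \<noteq> i \<Longrightarrow> r \<noteq> i' \<Longrightarrow> L (r,j) \<noteq> L (i,j')"
    and o2: "\<And>s. s \<in> {1..n} \<Longrightarrow> s \<noteq> j \<Longrightarrow> s \<noteq> j' \<Longrightarrow> L (i,s) \<noteq> L (i',j')"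
    and o3: "\<And>r. r \<in> {1..n} \<Longrightarrow> r \<noteq> i \<Longrightarrow> r \<noteq> i' \<Longrightarrow> L (r,j') \<noteq> L (i',j)"
    and o4: "\<And>s. s \<in> {1..n} \<Longrightarrow> s \<noteq> j \<Longrightarrow> s \<noteq> j' \<Longrightarrow> L (i',s) \<noteq> L (i,j)"
  shows False
proof -
  have ij: "i \<in> {1..n}" "j \<in> {1..n}" "i' \<in> {1..n}" "j' \<in> {1..n}" using Ucell[OF x] Ucell[OF w] by auto
  define a b e c where "a = L (i,j)" "b = L (i,j')" "e = L (i',j)" "c = L (i',j')"
  have dd: "a \<noteq> b" "e \<noteq> c" "a \<noteq> e" "b \<noteq> c"
    unfolding a_b_e_c_def using row_ne[OF ij(1) ij(2) ij(4) d(2)] row_ne[OF ij(3) ij(2) ij(4) d(2)]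
      col_ne[OF ij(2) ij(1) ij(3) d(1)] col_ne[OF ij(4) ij(1) ij(3) d(1)] by auto
  let ?L' = "L((i,j) := b, (i,j') := c, (i',j') := e, (i',j) := a)"
  have "?L' = L"
  proof (rule no_trade[of "{(i,j),(i,j'),(i',j'),(i',j)}"])
    show "{(i,j),(i,j'),(i',j'),(i',j)} \<subseteq> U" using x y z w by auto
  next
    fix cc assume "cc \<in> {(i,j),(i,j'),(i',j'),(i',j)}" then show "?L' cc \<in> {1..k}"
      unfolding a_b_e_c_def using rng ij by auto
  next
    fix i0 j0 s assume m: "(i0,j0) \<in> {(i,j),(i,j'),(i',j'),(i',j)}" and s: "s \<in> {1..n}" "s \<noteq> j0"
    have h1: "L (i,s) \<noteq> b" if "s \<noteq> j'" unfolding a_b_e_c_def using row_ne[OF ij(1) s(1) ij(4) that] .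
    have h2: "L (i,s) \<noteq> c" if "s \<noteq> j'" "s \<noteq> j" using o2 s that unfolding a_b_e_c_def by auto
    have h3: "L (i',s) \<noteq> e" if "s \<noteq> j" unfolding a_b_e_c_def using row_ne[OF ij(3) s(1) ij(2) that] .
    have h4: "L (i',s) \<noteq> a" if "s \<noteq> j'" "s \<noteq> j" using o4 s that unfolding a_b_e_c_def by auto
    from m consider "i0 = i" "j0 = j" | "i0 = i" "j0 = j'" | "i0 = i'" "j0 = j'" | "i0 = i'" "j0 = j" by auto
    then show "?L' (i0,s) \<noteq> ?L' (i0,j0)"
      by cases (use h1 h2 h3 h4 s d dd in auto)
  next
    fix i0 j0 r assume m: "(i0,j0) \<in> {(i,j),(i,j'),(i',j'),(i',j)}" and r: "r \<in> {1..n}" "r \<noteq> i0"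
    have h1: "L (r,j) \<noteq> b" if "r \<noteq> i" "r \<noteq> i'" using o1 r that unfolding a_b_e_c_def by auto
    have h2: "L (r,j) \<noteq> a" if "r \<noteq> i" unfolding a_b_e_c_def using col_ne[OF ij(2) r(1) ij(1) that] .
    have h3: "L (r,j') \<noteq> c" if "r \<noteq> i'" unfolding a_b_e_c_def using col_ne[OF ij(4) r(1) ij(3) that] .
    have h4: "L (r,j') \<noteq> e" if "r \<noteq> i" "r \<noteq> i'" using o3 r that unfolding a_b_e_c_def by auto
    from m consider "i0 = i" "j0 = j" | "i0 = i" "j0 = j'" | "i0 = i'" "j0 = j'" | "i0 = i'" "j0 = j" by auto
    then show "?L' (r,j0) \<noteq> ?L' (i0,j0)"
      by cases (use h1 h2 h3 h4 r d dd in auto)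
  qed auto
  then have "?L' (i,j) = L (i,j)" by simp
  then have "b = a" using d unfolding a_b_e_c_def by simp
  then show False using dd by simp
qed

lemma C4:
  assumes x: "(i,j) \<in> U" and y: "(i,j') \<in> U" and z: "(i',j) \<in> U" and w: "(i',j') \<in> U"
    and d: "i \<noteq> i'" "j \<noteq> j'"
  shows False
proof -
  have ij: "i \<in> {1..n}" "j \<in> {1..n}" "i' \<in> {1..n}" "j' \<in> {1..n}" using Ucell[OF x] Ucell[OF w] by auto
  define a b e c where "a = L (i,j)" "b = L (i,j')" "e = L (i',j)" "c = L (i',j')"
  have dd: "a \<noteq> b" "e \<noteq> c" "a \<noteq> e" "b \<noteq> c"
    unfolding a_b_e_c_def using row_ne[OF ij(1) ij(2) ij(4) d(2)] row_ne[OF ij(3) ij(2) ij(4) d(2)]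
      col_ne[OF ij(2) ij(1) ij(3) d(1)] col_ne[OF ij(4) ij(1) ij(3) d(1)] by auto
  have f: "inrow i a" "inrow i b" "inrow i' e" "inrow i' c" "incol j a" "incol j e" "incol j' b" "incol j' c"
    unfolding a_b_e_c_def using inrowI incolI ij by auto
  have cv1: "incol jj v" if "r \<in> {1..n}" "L (r,jj) = v" for r jj v using that unfolding incol_def by blast
  have rv1: "inrow ii v" if "s \<in> {1..n}" "L (ii,s) = v" for s ii v using that unfolding inrow_def by blast
  have rA: "(incol j b \<and> b \<noteq> e) \<or> (inrow i c \<and> c \<noteq> a) \<or> (incol j' e \<and> e \<noteq> b) \<or> (inrow i' a \<and> a \<noteq> c)"
  proof (rule ccontr)
    assume A: "\<not> ?thesis"
    show False
    proof (rule rot4[OF x y z w d])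
      fix r assume r: "r \<in> {1..n}" "r \<noteq> i" "r \<noteq> i'"
      show "L (r,j) \<noteq> L (i,j')"
      proof
        assume "L (r,j) = L (i,j')"
        then have "incol j b" "b \<noteq> e" unfolding a_b_e_c_def using cv1 r col_ne[OF ij(2) r(1) ij(3) r(3)] by auto
        then show False using A by blast
      qed
    next
      fix r assume r: "r \<in> {1..n}" "r \<noteq> i" "r \<noteq> i'"
      show "L (r,j') \<noteq> L (i',j)"
      proof
        assume "L (r,j') = L (i',j)"
        then have "incol j' e" "e \<noteq> b" unfolding a_b_e_c_def using cv1 r col_ne[OF ij(4) r(1) ij(1) r(2)] by auto
        then show False using A by blast
      qed
    next
      fix s assume s: "s \<in> {1..n}" "s \<noteq> j" "s \<noteq> j'"
      show "L (i,s) \<noteq> L (i',j')"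
      proof
        assume "L (i,s) = L (i',j')"
        then have "inrow i c" "c \<noteq> a" unfolding a_b_e_c_def using rv1 s row_ne[OF ij(1) s(1) ij(2) s(2)] by auto
        then show False using A by blast
      qed
    next
      fix s assume s: "s \<in> {1..n}" "s \<noteq> j" "s \<noteq> j'"
      show "L (i',s) \<noteq> L (i,j)"
      proof
        assume "L (i',s) = L (i,j)"
        then have "inrow i' a" "a \<noteq> c" unfolding a_b_e_c_def using rv1 s row_ne[OF ij(3) s(1) ij(4) s(3)] by auto
        then show False using A by blast
      qed
    qed
  qed
  have rB: "(inrow i e \<and> e \<noteq> b) \<or> (incol j c \<and> c \<noteq> a) \<or> (inrow i' b \<and> b \<noteq> e) \<or> (incol j' a \<and> a \<noteq> c)"
  proof (rule ccontr)
    assume A: "\<not> ?thesis"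
    show False
    proof (rule rot4[OF z w x y d(1)[symmetric] d(2)])
      fix r assume r: "r \<in> {1..n}" "r \<noteq> i'" "r \<noteq> i"
      show "L (r,j) \<noteq> L (i',j')"
      proof
        assume "L (r,j) = L (i',j')"
        then have "incol j c" "c \<noteq> a" unfolding a_b_e_c_def using cv1 r col_ne[OF ij(2) r(1) ij(1) r(3)] by auto
        then show False using A by blast
      qed
    next
      fix r assume r: "r \<in> {1..n}" "r \<noteq> i'" "r \<noteq> i"
      show "L (r,j') \<noteq> L (i,j)"
      proof
        assume "L (r,j') = L (i,j)"
        then have "incol j' a" "a \<noteq> c" unfolding a_b_e_c_def using cv1 r col_ne[OF ij(4) r(1) ij(3) r(2)] by auto
        then show False using A by blast
      qed
    next
      fix s assume s: "s \<in> {1..n}" "s \<noteq> j" "s \<noteq> j'"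
      show "L (i',s) \<noteq> L (i,j')"
      proof
        assume "L (i',s) = L (i,j')"
        then have "inrow i' b" "b \<noteq> e" unfolding a_b_e_c_def using rv1 s row_ne[OF ij(3) s(1) ij(2) s(2)] by auto
        then show False using A by blast
      qed
    next
      fix s assume s: "s \<in> {1..n}" "s \<noteq> j" "s \<noteq> j'"
      show "L (i,s) \<noteq> L (i',j)"
      proof
        assume "L (i,s) = L (i',j)"
        then have "inrow i e" "e \<noteq> b" unfolding a_b_e_c_def using rv1 s row_ne[OF ij(1) s(1) ij(4) s(3)] by auto
        then show False using A by blast
      qed
    qed
  qed
  have s1: "incol j b \<or> incol j' a" using SWrow[OF x y d(2)] unfolding a_b_e_c_def .
  have s2: "incol j c \<or> incol j' e" using SWrow[OF z w d(2)] unfolding a_b_e_c_def .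
  have s3: "inrow i e \<or> inrow i' a" using SWcol[OF x z d(1)] unfolding a_b_e_c_def .
  have s4: "inrow i c \<or> inrow i' b" using SWcol[OF y w d(1)] unfolding a_b_e_c_def .
  show False
    by (rule C4_abs[of "inrow i" a b "inrow i'" e c "incol j" "incol j'", OF f dd I2[OF x] I2[OF y] I2[OF z] I2[OF w] s1 s2 s3 s4 rA rB])
qed


lemma P5:
  assumes x1: "(r1,c0) \<in> U" and x2: "(r1,c1) \<in> U" and x3: "(r2,c1) \<in> U" and x4: "(r2,c2) \<in> U" and x5: "(r3,c2) \<in> U"
    and dr: "r1 \<noteq> r2" "r1 \<noteq> r3" "r2 \<noteq> r3" and dc: "c0 \<noteq> c1" "c0 \<noteq> c2" "c1 \<noteq> c2"
  shows False
proof -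
  have ij: "r1 \<in> {1..n}" "r2 \<in> {1..n}" "r3 \<in> {1..n}" "c0 \<in> {1..n}" "c1 \<in> {1..n}" "c2 \<in> {1..n}"
    using Ucell[OF x1] Ucell[OF x3] Ucell[OF x5] by auto
  have rows: "inrow r1 (L (r1,c0))" "inrow r1 (L (r1,c1))" "inrow r1 (L (r1,c2))"
     "inrow r2 (L (r2,c0))" "inrow r2 (L (r2,c1))" "inrow r2 (L (r2,c2))"
     "inrow r3 (L (r3,c0))" "inrow r3 (L (r3,c1))" "inrow r3 (L (r3,c2))"
    using inrowI ij by auto
  have cols: "incol c0 (L (r1,c0))" "incol c0 (L (r2,c0))" "incol c0 (L (r3,c0))"
     "incol c1 (L (r1,c1))" "incol c1 (L (r2,c1))" "incol c1 (L (r3,c1))"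
     "incol c2 (L (r1,c2))" "incol c2 (L (r2,c2))" "incol c2 (L (r3,c2))"
    using incolI ij by auto
  have drr: "L (r1,c0) \<noteq> L (r1,c1)" "L (r1,c0) \<noteq> L (r1,c2)" "L (r1,c1) \<noteq> L (r1,c2)"
     "L (r2,c0) \<noteq> L (r2,c1)" "L (r2,c0) \<noteq> L (r2,c2)" "L (r2,c1) \<noteq> L (r2,c2)"
     "L (r3,c0) \<noteq> L (r3,c1)" "L (r3,c0) \<noteq> L (r3,c2)" "L (r3,c1) \<noteq> L (r3,c2)"
    using row_ne ij dc by auto
  have dcc: "L (r1,c0) \<noteq> L (r2,c0)" "L (r1,c0) \<noteq> L (r3,c0)" "L (r2,c0) \<noteq> L (r3,c0)"
     "L (r1,c1) \<noteq> L (r2,c1)" "L (r1,c1) \<noteq> L (r3,c1)" "L (r2,c1) \<noteq> L (r3,c1)"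
     "L (r1,c2) \<noteq> L (r2,c2)" "L (r1,c2) \<noteq> L (r3,c2)" "L (r2,c2) \<noteq> L (r3,c2)"
    using col_ne ij dr by auto
  have K: "L (r1,c0) \<in> {1..k}" "L (r1,c1) \<in> {1..k}" "L (r2,c1) \<in> {1..k}" "L (r2,c2) \<in> {1..k}"
     "L (r3,c2) \<in> {1..k}" "L (r2,c0) \<in> {1..k}" "L (r1,c2) \<in> {1..k}" "L (r3,c1) \<in> {1..k}" "L (r3,c0) \<in> {1..k}"
    using rng ij by auto
  show False
    by (rule P5_abs[of "inrow r1" "L (r1,c0)" "L (r1,c1)" "L (r1,c2)" "inrow r2" "L (r2,c0)" "L (r2,c1)" "L (r2,c2)"
          "inrow r3" "L (r3,c0)" "L (r3,c1)" "L (r3,c2)" "incol c0" "incol c1" "incol c2" "\<lambda>v. v \<in> {1..k}",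
          OF rows(1,2,3,4,5,6,7,8,9) cols(1,2,3,4,5,6,7,8,9)
             drr(1,2,3,4,5,6,7,8,9) dcc(1,2,3,4,5,6,7,8,9) K(1,2,3,4,5,6,7,8,9)
             CC[OF x2] CC[OF x3] CC[OF x4] I2[OF x1] I2[OF x2] I2[OF x3] I2[OF x4] I2[OF x5]
             SWrow[OF x1 x2 dc(1)] SWcol[OF x2 x3 dr(1)] SWrow[OF x3 x4 dc(3)] SWcol[OF x4 x5 dr(3)]])
qed


definition rn :: "nat \<times> nat \<Rightarrow> bool" where "rn x \<longleftrightarrow> (\<exists>y\<in>U. y \<noteq> x \<and> fst y = fst x)"
definition cn :: "nat \<times> nat \<Rightarrow> bool" where "cn x \<longleftrightarrow> (\<exists>y\<in>U. y \<noteq> x \<and> snd y = snd x)"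

lemma finU: "finite U"
  using Usub finite_subset unfolding cells_def by blast

lemma L3r: "x \<in> U \<Longrightarrow> y \<in> U \<Longrightarrow> z \<in> U \<Longrightarrow> fst x = fst y \<Longrightarrow> fst x = fst z \<Longrightarrow>
  x \<noteq> y \<Longrightarrow> x \<noteq> z \<Longrightarrow> y \<noteq> z \<Longrightarrow> False"
  using L3row[of "fst x" "snd x" "snd y" "snd z"] by (metis prod.collapse)

lemma L3c: "x \<in> U \<Longrightarrow> y \<in> U \<Longrightarrow> z \<in> U \<Longrightarrow> snd x = snd y \<Longrightarrow> snd x = snd z \<Longrightarrow>
  x \<noteq> y \<Longrightarrow> x \<noteq> z \<Longrightarrow> y \<noteq> z \<Longrightarrow> False"
  using L3col[of "fst x" "snd x" "fst y" "fst z"] by (metis prod.collapse)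

lemma deg2:
  assumes x: "x \<in> U" and "rn x" "cn x"
  shows "(\<exists>y\<in>U. y \<noteq> x \<and> fst y = fst x \<and> \<not> cn y) \<or> (\<exists>z\<in>U. z \<noteq> x \<and> snd z = snd x \<and> \<not> rn z)"
proof (rule ccontr)
  assume A: "\<not> ?thesis"
  obtain y where y: "y \<in> U" "y \<noteq> x" "fst y = fst x" using \<open>rn x\<close> unfolding rn_def by blast
  obtain z where z: "z \<in> U" "z \<noteq> x" "snd z = snd x" using \<open>cn x\<close> unfolding cn_def by blast
  have "cn y" using A y by blast
  then obtain y' where y': "y' \<in> U" "y' \<noteq> y" "snd y' = snd y" unfolding cn_def by blast
  have "rn z" using A z by blast
  then obtain z' where z': "z' \<in> U" "z' \<noteq> z" "fst z' = fst z" unfolding rn_def by blast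
  obtain r2 c1 where xe: "x = (r2,c1)" by (cases x)
  obtain c2 where ye: "y = (r2,c2)" using y xe by (cases y) auto
  obtain r1 where ze: "z = (r1,c1)" using z xe by (cases z) auto
  obtain r3 where y'e: "y' = (r3,c2)" using y' ye by (cases y') auto
  obtain c0 where z'e: "z' = (r1,c0)" using z' ze by (cases z') auto
  have d: "c2 \<noteq> c1" "r1 \<noteq> r2" "r3 \<noteq> r2" "c0 \<noteq> c1" using y z y' z' xe ye ze y'e z'e by auto
  have U5: "(r1,c0) \<in> U" "(r1,c1) \<in> U" "(r2,c1) \<in> U" "(r2,c2) \<in> U" "(r3,c2) \<in> U"
    using x y z y' z' xe ye ze y'e z'e by auto
  show False
  proof (cases "r1 = r3")
    case True
    show False
    proof (cases "c0 = c2")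
      case True
      then show False using C4[of r1 c1 c2 r2] U5 \<open>r1 = r3\<close> d by auto
    next
      case False
      then show False using L3row[of r1 c0 c1 c2] U5 \<open>r1 = r3\<close> d by auto
    qed
  next
    case False
    show False
    proof (cases "c0 = c2")
      case True
      then show False using L3col[of r1 c2 r2 r3] U5 d False by auto
    next
      case F2: False
      then show False using P5[OF U5] d False by auto
    qed
  qed
qed

lemma row_count: "2 * card U \<le> 2 * n + card {x\<in>U. rn x}"
proof -
  let ?F = "\<lambda>i. {x\<in>U. fst x = i}"
  have Uu: "U = (\<Union>i\<in>{1..n}. ?F i)" using Usub unfolding cells_def by auto
  have RNu: "{x\<in>U. rn x} = (\<Union>i\<in>{1..n}. ?F i \<inter> {x. rn x})" using Usub unfolding cells_def by auto
  have fin: "\<And>i. finite (?F i)" using finU by auto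
  have cU: "card U = (\<Sum>i\<in>{1..n}. card (?F i))"
    by (subst Uu, rule card_UN_disjoint) (use fin in auto)
  have cR: "card {x\<in>U. rn x} = (\<Sum>i\<in>{1..n}. card (?F i \<inter> {x. rn x}))"
    by (subst RNu, rule card_UN_disjoint) (use fin in auto)
  have per: "2 * card (?F i) \<le> 2 + card (?F i \<inter> {x. rn x})" for i
  proof (cases "card (?F i) \<le> 1")
    case True then show ?thesis by simp
  next
    case False
    have le2: "card (?F i) \<le> 2"
    proof (rule ccontr)
      assume "\<not> card (?F i) \<le> 2"
      then have "2 < card (?F i)" by simp
      then obtain T where T: "T \<subseteq> ?F i" "card T = 3"
        using obtain_subset_with_card_n[of 3 "?F i"] by auto
      then obtain a b c where "T = {a,b,c}" "a \<noteq> b" "b \<noteq> c" "a \<noteq> c"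
        by (auto simp add: card_3_iff)
      then have "a \<in> ?F i" "b \<in> ?F i" "c \<in> ?F i" "a \<noteq> b" "a \<noteq> c" "b \<noteq> c" using T by auto
      then show False using L3r[of a b c] by auto
    qed
    have "?F i \<subseteq> {x. rn x}"
    proof
      fix x assume xF: "x \<in> ?F i"
      from False have "1 < card (?F i)" by simp
      then obtain a b where ab: "a \<in> ?F i" "b \<in> ?F i" "a \<noteq> b"
      proof -
        have "\<not> (\<forall>a1\<in>?F i. \<forall>a2\<in>?F i. a1 = a2)" using False card_le_Suc0_iff_eq[OF fin[of i]] by simp
        then show ?thesis using that by blast
      qed
      then have "\<exists>y\<in>U. y \<noteq> x \<and> fst y = fst x" using xF by (cases "a = x") auto
      then show "x \<in> {x. rn x}" unfolding rn_def by simp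
    qed
    then have "?F i \<inter> {x. rn x} = ?F i" by auto
    then show ?thesis using le2 by simp
  qed
  have "2 * card U = (\<Sum>i\<in>{1..n}. 2 * card (?F i))" by (simp add: cU sum_distrib_left)
  also have "\<dots> \<le> (\<Sum>i\<in>{1..n}. 2 + card (?F i \<inter> {x. rn x}))" by (rule sum_mono) (rule per)
  also have "\<dots> = (\<Sum>i\<in>{1..n}. 2) + (\<Sum>i\<in>{1..n}. card (?F i \<inter> {x. rn x}))" by (rule sum.distrib)
  also have "\<dots> = 2 * n + card {x\<in>U. rn x}" using cR by simp
  finally show ?thesis .
qed

lemma col_count: "2 * card U \<le> 2 * n + card {x\<in>U. cn x}"
proof -
  let ?F = "\<lambda>i. {x\<in>U. snd x = i}"
  have Uu: "U = (\<Union>i\<in>{1..n}. ?F i)" using Usub unfolding cells_def by auto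
  have RNu: "{x\<in>U. cn x} = (\<Union>i\<in>{1..n}. ?F i \<inter> {x. cn x})" using Usub unfolding cells_def by auto
  have fin: "\<And>i. finite (?F i)" using finU by auto
  have cU: "card U = (\<Sum>i\<in>{1..n}. card (?F i))"
    by (subst Uu, rule card_UN_disjoint) (use fin in auto)
  have cR: "card {x\<in>U. cn x} = (\<Sum>i\<in>{1..n}. card (?F i \<inter> {x. cn x}))"
    by (subst RNu, rule card_UN_disjoint) (use fin in auto)
  have per: "2 * card (?F i) \<le> 2 + card (?F i \<inter> {x. cn x})" for i
  proof (cases "card (?F i) \<le> 1")
    case True then show ?thesis by simp
  next
    case False
    have le2: "card (?F i) \<le> 2"
    proof (rule ccontr)
      assume "\<not> card (?F i) \<le> 2"
      then have "2 < card (?F i)" by simp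
      then obtain T where T: "T \<subseteq> ?F i" "card T = 3"
        using obtain_subset_with_card_n[of 3 "?F i"] by auto
      then obtain a b c where "T = {a,b,c}" "a \<noteq> b" "b \<noteq> c" "a \<noteq> c"
        by (auto simp add: card_3_iff)
      then have "a \<in> ?F i" "b \<in> ?F i" "c \<in> ?F i" "a \<noteq> b" "a \<noteq> c" "b \<noteq> c" using T by auto
      then show False using L3c[of a b c] by auto
    qed
    have "?F i \<subseteq> {x. cn x}"
    proof
      fix x assume xF: "x \<in> ?F i"
      from False have "1 < card (?F i)" by simp
      then obtain a b where ab: "a \<in> ?F i" "b \<in> ?F i" "a \<noteq> b"
      proof -
        have "\<not> (\<forall>a1\<in>?F i. \<forall>a2\<in>?F i. a1 = a2)" using False card_le_Suc0_iff_eq[OF fin[of i]] by simp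
        then show ?thesis using that by blast
      qed
      then have "\<exists>y\<in>U. y \<noteq> x \<and> snd y = snd x" using xF by (cases "a = x") auto
      then show "x \<in> {x. cn x}" unfolding cn_def by simp
    qed
    then have "?F i \<inter> {x. cn x} = ?F i" by auto
    then show ?thesis using le2 by simp
  qed
  have "2 * card U = (\<Sum>i\<in>{1..n}. 2 * card (?F i))" by (simp add: cU sum_distrib_left)
  also have "\<dots> \<le> (\<Sum>i\<in>{1..n}. 2 + card (?F i \<inter> {x. cn x}))" by (rule sum_mono) (rule per)
  also have "\<dots> = (\<Sum>i\<in>{1..n}. 2) + (\<Sum>i\<in>{1..n}. card (?F i \<inter> {x. cn x}))" by (rule sum.distrib)
  also have "\<dots> = 2 * n + card {x\<in>U. cn x}" using cR by simp
  finally show ?thesis .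
qed


lemma arith_aux: "(r::nat) + c = s + d2 \<Longrightarrow> s = d1 + d2 \<Longrightarrow> s \<le> u \<Longrightarrow> d2 \<le> d1 \<Longrightarrow> 2 * (r + c) \<le> 3 * u"
  by (simp only: add_mult_distrib2)

lemma deg_count: "2 * (card {x\<in>U. rn x} + card {x\<in>U. cn x}) \<le> 3 * card U"
proof -
  let ?R = "{x\<in>U. rn x}" and ?C = "{x\<in>U. cn x}"
  let ?D2 = "?R \<inter> ?C" and ?D1 = "(?R \<union> ?C) - (?R \<inter> ?C)"
  have fR: "finite ?R" and fC: "finite ?C" using finU by auto
  have e1: "card ?R + card ?C = card (?R \<union> ?C) + card ?D2" using card_Un_Int[OF fR fC] .
  have e2: "card (?R \<union> ?C) = card ?D1 + card ?D2"
  proof -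
    have a: "card ?D1 = card (?R \<union> ?C) - card ?D2" by (rule card_Diff_subset) (use fR fC in auto)
    have b: "card ?D2 \<le> card (?R \<union> ?C)" by (rule card_mono) (use fR fC in auto)
    show ?thesis using a b by linarith
  qed
  have e3: "card (?R \<union> ?C) \<le> card U" using finU by (intro card_mono) auto
  define P where "P x y \<longleftrightarrow> y \<in> U \<and> y \<noteq> x \<and> ((fst y = fst x \<and> \<not> cn y) \<or> (snd y = snd x \<and> \<not> rn y))" for x y
  define f where "f x = (SOME y. P x y)" for x
  have fP: "P x (f x)" if "x \<in> ?D2" for x
  proof -
    have "\<exists>y. P x y" using deg2[of x] that unfolding P_def by blast
    then show ?thesis unfolding f_def by (rule someI_ex)
  qed
  have inD1: "f x \<in> ?D1" if "x \<in> ?D2" for x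
  proof -
    have P: "P x (f x)" using fP that .
    have xU: "x \<in> U" using that by auto
    show ?thesis
    proof (cases "fst (f x) = fst x \<and> \<not> cn (f x)")
      case True
      then have "rn (f x)" using P xU unfolding P_def rn_def by metis
      then show ?thesis using True P unfolding P_def by auto
    next
      case False
      then have "snd (f x) = snd x \<and> \<not> rn (f x)" using P unfolding P_def by blast
      moreover then have "cn (f x)" using P xU unfolding P_def cn_def by metis
      ultimately show ?thesis using P unfolding P_def by auto
    qed
  qed
  have inj: "inj_on f ?D2"
  proof (rule inj_onI)
    fix x1 x2 assume x1: "x1 \<in> ?D2" and x2: "x2 \<in> ?D2" and eq: "f x1 = f x2"
    show "x1 = x2"
    proof (rule ccontr)
      assume ne: "x1 \<noteq> x2"
      have P1: "P x1 (f x1)" and P2: "P x2 (f x2)" using fP x1 x2 by auto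
      have U12: "x1 \<in> U" "x2 \<in> U" using x1 x2 by auto
      let ?w = "f x1"
      have w: "?w \<in> U" "?w \<noteq> x1" "?w \<noteq> x2" using P1 P2 eq unfolding P_def by auto
      consider "fst ?w = fst x1" "\<not> cn ?w" | "snd ?w = snd x1" "\<not> rn ?w" using P1 unfolding P_def by blast
      then show False
      proof cases
        case 1
        consider "fst ?w = fst x2" | "snd ?w = snd x2" "\<not> rn ?w" using P2 eq unfolding P_def by auto
        then show False
        proof cases
          case 1
          then show False using L3r[of ?w x1 x2] w U12 ne \<open>fst ?w = fst x1\<close> by auto
        next
          case 2
          then have "cn ?w" using U12 w unfolding cn_def by metis
          then show False using \<open>\<not> cn ?w\<close> by blast
        qed
      next
        case 2
        consider "fst ?w = fst x2" "\<not> cn ?w" | "snd ?w = snd x2" using P2 eq unfolding P_def by auto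
        then show False
        proof cases
          case 1
          then have "rn ?w" using U12 w unfolding rn_def by metis
          then show False using \<open>\<not> rn ?w\<close> by blast
        next
          case 2
          then show False using L3c[of ?w x1 x2] w U12 ne \<open>snd ?w = snd x1\<close> by auto
        qed
      qed
    qed
  qed
  have sub: "f ` ?D2 \<subseteq> ?D1" using inD1 by blast
  have fD1: "finite ?D1" using fR fC by blast
  have "card ?D2 \<le> card ?D1" by (rule card_inj_on_le[OF inj sub fD1])
  from arith_aux[OF e1 e2 e3 this] show ?thesis .
qed

lemma main_bound: "5 * card U \<le> 8 * n"
proof -
  have "2 * card {x\<in>U. rn x} + 2 * card {x\<in>U. cn x} \<le> 3 * card U" using deg_count by simp
  moreover have "2 * card U \<le> 2 * n + card {x\<in>U. rn x}" by (rule row_count)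
  moreover have "2 * card U \<le> 2 * n + card {x\<in>U. cn x}" by (rule col_count)
  ultimately show ?thesis by linarith
qed

end

theorem theorem1:
  fixes n :: nat and A :: "nat \<times> nat \<Rightarrow> nat option"
  assumes "n \<ge> 1"
    and "partial_coloring n (2 * n - 2) A"
    and "uniquely_extends n (2 * n - 2) A"
  shows "real (card (uncolored n A)) \<le> 8 * real n / 5"
proof -
  let ?k = "2 * n - 2"
  obtain L where L: "L \<in> extensions n ?k A" and uniq: "\<And>L'. L' \<in> extensions n ?k A \<Longrightarrow> L' = L"
    using assms(3) unfolding uniquely_extends_def by blast
  have lat: "latin_like n ?k L" using L unfolding extensions_def by blast
  have agree: "\<And>c x. c \<in> cells n \<Longrightarrow> A c = Some x \<Longrightarrow> L c = x" using L unfolding extensions_def by blast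
  have n2: "n \<ge> 2"
  proof (rule ccontr)
    assume "\<not> n \<ge> 2"
    then have n1: "n = 1" using assms(1) by simp
    have "(1,1) \<in> cells n" unfolding cells_def using n1 by simp
    then have "L (1,1) \<in> {1..?k}" using lat unfolding latin_like_def by blast
    then show False using n1 by simp
  qed
  interpret U: uq n ?k L "uncolored n A"
  proof
    show "latin_like n ?k L" by (rule lat)
    show "uncolored n A \<subseteq> cells n" unfolding uncolored_def by auto
    show "?k + 2 = 2 * n" using n2 by simp
  next
    fix L' assume lat': "latin_like n ?k L'" and ag: "\<forall>c\<in>cells n - uncolored n A. L' c = L c"
    have "L' \<in> extensions n ?k A"
      unfolding extensions_def
    proof (intro CollectI conjI ballI allI impI)
      show "latin_like n ?k L'" by (rule lat')
    next
      fix c x assume c: "c \<in> cells n" and Ac: "A c = Some x"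
      then have "c \<notin> uncolored n A" unfolding uncolored_def by auto
      then have "L' c = L c" using ag c by blast
      then show "L' c = x" using agree[OF c Ac] by simp
    qed
    then show "L' = L" by (rule uniq)
  qed
  have "5 * card (uncolored n A) \<le> 8 * n" by (rule U.main_bound)
  then have "real (5 * card (uncolored n A)) \<le> real (8 * n)" by (simp only: of_nat_le_iff)
  then show ?thesis by simp
qed

end
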